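(* Let $F$ be a finite, positive integral frieze pattern of width $N$ and let $T$ be the triangulation of $P_N$ with $F=F_T$. Then: (1) the principal growth coefficient of $F$ is $-2$ if and only if $T$ has no nontrivial rotational symmetry; (2) the principal growth coefficient of $F$ is $0$ if and only if $T$ has $2$-fold rotational symmetry; (3) the principal growth coefficient of $F$ is $1$ if and only if $T$ has $3$-fold rotational symmetry.
   Context: $P_N$ is a convex polygon with vertices $v_0,\ldots,v_{N-1}$ clockwise, indices mod $N$. For a triangulation $T$ of $P_N$ let $a_i$ be the number of triangles of $T$ incident to $v_{i\bmod N}$; $F_T$ is defined for all $j\ge i$ by $F_T(i,i)=0$, $F_T(i,i+1)=1$, $F_T(i,j+1)=a_jF_T(i,j)-F_T(i,j-1)$. A finite positive integral frieze pattern of width $N$ is a function $F$ on $\{0\le j-i\le N\}$ with $F(i,i)=F(i,i+N)=0$, $F(i,i+1)=F(i,i+N-1)=1$, $F(i,j)F(i+1,j+1)-F(i+1,j)F(i,j+1)=1$ whenever defined, and positive integer entries for $0<j-i<N$; it is a known fact that every such $F$ equals the restriction of $F_T$ to $0\le j-i\le N$ for a unique triangulation $T$, and $F_T$ (defined for all $j\ge i$) is its unique tame extension to an infinite frieze pattern. The principal growth coefficient of $F$ is $F_T(i,i+p+1)-F_T(i+1,i+p)$ (independent of $i$), where $p$ is the minimal period of the quiddity row $(a_i)$. $T$ has $k$-fold rotational symmetry if $k\mid N$ and $T$ is invariant under the rotation $v_i\mapsto v_{i+N/k}$. *)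

theory Defs
  imports Main
begin

text \<open>Convex N-gon with vertices 0..N-1 (clockwise). A diagonal/side is
  represented as an ordered pair (x,y) with x < y.\<close>

definition is_side :: "nat \<Rightarrow> nat \<Rightarrow> nat \<Rightarrow> bool" where
  "is_side N x y \<longleftrightarrow> x < y \<and> y < N \<and> (y = x + 1 \<or> (x = 0 \<and> y = N - 1))"

definition is_diag :: "nat \<Rightarrow> nat \<Rightarrow> nat \<Rightarrow> bool" where
  "is_diag N x y \<longleftrightarrow> x < y \<and> y < N \<and> \<not> is_side N x y"

definition crosses :: "nat \<times> nat \<Rightarrow> nat \<times> nat \<Rightarrow> bool" where
  "crosses d e \<longleftrightarrow> (case d of (x, y) \<Rightarrow> case e of (u, v) \<Rightarrow>
     (x < u \<and> u < y \<and> y < v) \<or> (u < x \<and> x < v \<and> v < y))"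

definition noncrossing_diags :: "nat \<Rightarrow> (nat \<times> nat) set \<Rightarrow> bool" where
  "noncrossing_diags N D \<longleftrightarrow>
     (\<forall>(x, y) \<in> D. is_diag N x y) \<and> (\<forall>d \<in> D. \<forall>e \<in> D. \<not> crosses d e)"

definition triangulation :: "nat \<Rightarrow> (nat \<times> nat) set \<Rightarrow> bool" where
  "triangulation N T \<longleftrightarrow> 3 \<le> N \<and> noncrossing_diags N T \<and>
     (\<forall>D. noncrossing_diags N D \<and> T \<subseteq> D \<longrightarrow> D = T)"

definition is_edge :: "nat \<Rightarrow> (nat \<times> nat) set \<Rightarrow> nat \<Rightarrow> nat \<Rightarrow> bool" where
  "is_edge N T x y \<longleftrightarrow> is_side N x y \<or> (x, y) \<in> T"

definition triangles :: "nat \<Rightarrow> (nat \<times> nat) set \<Rightarrow> (nat \<times> nat \<times> nat) set" where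
  "triangles N T = {(a, b, c). a < b \<and> b < c \<and> is_edge N T a b \<and> is_edge N T b c \<and> is_edge N T a c}"

definition quiddity :: "nat \<Rightarrow> (nat \<times> nat) set \<Rightarrow> int \<Rightarrow> int" where
  "quiddity N T i = int (card {(a, b, c) \<in> triangles N T. nat (i mod int N) \<in> {a, b, c}})"

fun FT_aux :: "(int \<Rightarrow> int) \<Rightarrow> int \<Rightarrow> nat \<Rightarrow> int" where
  "FT_aux a i 0 = 0"
| "FT_aux a i (Suc 0) = 1"
| "FT_aux a i (Suc (Suc k)) = a (i + int k + 1) * FT_aux a i (Suc k) - FT_aux a i k"

definition FT :: "nat \<Rightarrow> (nat \<times> nat) set \<Rightarrow> int \<Rightarrow> int \<Rightarrow> int" where
  "FT N T i j = FT_aux (quiddity N T) i (nat (j - i))"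

definition min_period :: "(int \<Rightarrow> int) \<Rightarrow> nat" where
  "min_period a = (LEAST p::nat. 0 < p \<and> (\<forall>i. a (i + int p) = a i))"

text \<open>Principal growth coefficient F_T(i,i+p+1) - F_T(i+1,i+p), evaluated at i = 0.\<close>
definition pgc :: "nat \<Rightarrow> (nat \<times> nat) set \<Rightarrow> int" where
  "pgc N T = (let p = int (min_period (quiddity N T)) in FT N T 0 (p + 1) - FT N T 1 p)"

definition rotate :: "nat \<Rightarrow> nat \<Rightarrow> nat \<times> nat \<Rightarrow> nat \<times> nat" where
  "rotate N s d = (case d of (x, y) \<Rightarrow>
     (min ((x + s) mod N) ((y + s) mod N), max ((x + s) mod N) ((y + s) mod N)))"

definition has_kfold_symmetry :: "nat \<Rightarrow> (nat \<times> nat) set \<Rightarrow> nat \<Rightarrow> bool" where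
  "has_kfold_symmetry N T k \<longleftrightarrow> k dvd N \<and> rotate N (N div k) ` T = T"

definition frieze_pattern :: "nat \<Rightarrow> (int \<Rightarrow> int \<Rightarrow> int) \<Rightarrow> bool" where
  "frieze_pattern N F \<longleftrightarrow>
     (\<forall>i. F i i = 0 \<and> F i (i + int N) = 0 \<and> F i (i + 1) = 1 \<and> F i (i + int N - 1) = 1) \<and>
     (\<forall>i j. i + 1 \<le> j \<and> j + 1 \<le> i + int N \<longrightarrow>
        F i j * F (i + 1) (j + 1) - F (i + 1) j * F i (j + 1) = 1) \<and>
     (\<forall>i j. 0 < j - i \<and> j - i < int N \<longrightarrow> 0 < F i j)"

end

theory Submission
  imports Defs
begin



definition sd :: "nat set \<Rightarrow> nat \<Rightarrow> nat \<Rightarrow> bool" where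
  "sd V x y \<longleftrightarrow> x \<in> V \<and> y \<in> V \<and> x < y \<and>
     ((\<forall>z\<in>V. \<not> (x < z \<and> z < y)) \<or> (\<forall>z\<in>V. x \<le> z \<and> z \<le> y))"

definition dg :: "nat set \<Rightarrow> nat \<Rightarrow> nat \<Rightarrow> bool" where
  "dg V x y \<longleftrightarrow> x \<in> V \<and> y \<in> V \<and> x < y \<and> \<not> sd V x y"

definition ncd :: "nat set \<Rightarrow> (nat \<times> nat) set \<Rightarrow> bool" where
  "ncd V D \<longleftrightarrow> (\<forall>(x, y) \<in> D. dg V x y) \<and> (\<forall>d \<in> D. \<forall>e \<in> D. \<not> crosses d e)"

definition tri :: "nat set \<Rightarrow> (nat \<times> nat) set \<Rightarrow> bool" where
  "tri V T \<longleftrightarrow> finite V \<and> 3 \<le> card V \<and> ncd V T \<and> (\<forall>D. ncd V D \<and> T \<subseteq> D \<longrightarrow> D = T)"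

definition ed :: "nat set \<Rightarrow> (nat \<times> nat) set \<Rightarrow> nat \<Rightarrow> nat \<Rightarrow> bool" where
  "ed V T x y \<longleftrightarrow> sd V x y \<or> (x, y) \<in> T"

definition trs :: "nat set \<Rightarrow> (nat \<times> nat) set \<Rightarrow> (nat \<times> nat \<times> nat) set" where
  "trs V T = {(a, b, c). a < b \<and> b < c \<and> ed V T a b \<and> ed V T b c \<and> ed V T a c}"

definition cnt :: "nat set \<Rightarrow> (nat \<times> nat) set \<Rightarrow> nat \<Rightarrow> nat" where
  "cnt V T v = card {(a, b, c) \<in> trs V T. v \<in> {a, b, c}}"

lemma crosses_sym: "crosses d e = crosses e d"
  by (cases d; cases e) (auto simp: crosses_def)

lemma crosses_self: "\<not> crosses d d"
  by (cases d) (auto simp: crosses_def)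

lemma tri_dg: "tri V T \<Longrightarrow> (x, y) \<in> T \<Longrightarrow> dg V x y"
  by (auto simp: tri_def ncd_def)

lemma tri_nc: "tri V T \<Longrightarrow> d \<in> T \<Longrightarrow> e \<in> T \<Longrightarrow> \<not> crosses d e"
  by (auto simp: tri_def ncd_def)

lemma tri_fin: "tri V T \<Longrightarrow> finite V"
  by (simp add: tri_def)

lemma tri_max:
  assumes "tri V T" "dg V x y" "\<forall>(u, v) \<in> T. \<not> crosses (x, y) (u, v)"
  shows "(x, y) \<in> T"
proof -
  have "ncd V (insert (x, y) T)"
    unfolding ncd_def
  proof (intro conjI ballI)
    fix d assume "d \<in> insert (x, y) T"
    then show "case d of (a, b) \<Rightarrow> dg V a b" using assms(1,2) tri_dg by (cases d) auto
  next
    fix d e assume d: "d \<in> insert (x, y) T" and e: "e \<in> insert (x, y) T"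
    show "\<not> crosses d e"
    proof -
      have c: "\<And>e. e \<in> T \<Longrightarrow> \<not> crosses (x, y) e" using assms(3) by auto
      show ?thesis using d e c tri_nc[OF assms(1)] crosses_sym crosses_self by (metis insert_iff)
    qed
  qed
  then have "insert (x, y) T = T" using assms(1) unfolding tri_def by blast
  then show ?thesis by blast
qed

lemma ed_in: "tri V T \<Longrightarrow> ed V T x y \<Longrightarrow> x \<in> V \<and> y \<in> V \<and> x < y"
  by (auto simp: ed_def sd_def dest: tri_dg simp: dg_def)

lemma sd_nc: "sd V x y \<Longrightarrow> u \<in> V \<Longrightarrow> v \<in> V \<Longrightarrow> \<not> crosses (x, y) (u, v)"
  unfolding sd_def crosses_def by force

lemma ed_nc: "tri V T \<Longrightarrow> ed V T x y \<Longrightarrow> (u, v) \<in> T \<Longrightarrow> \<not> crosses (x, y) (u, v)"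
  unfolding ed_def
  by (metis dg_def sd_nc tri_dg tri_nc)

lemma trs_sub: "tri V T \<Longrightarrow> trs V T \<subseteq> V \<times> V \<times> V"
  by (auto simp: trs_def dest: ed_in)

lemma trs_fin: "tri V T \<Longrightarrow> finite (trs V T)"
proof -
  assume a: "tri V T"
  have "finite (V \<times> V \<times> V)" using tri_fin[OF a] by simp
  then show ?thesis using trs_sub[OF a] finite_subset by blast
qed

lemma apex:
  assumes tri: "tri V T" and e: "ed V T x y" and ex: "\<exists>z\<in>V. x < z \<and> z < y"
  shows "\<exists>z\<in>V. x < z \<and> z < y \<and> ed V T x z \<and> ed V T z y"
proof -
  have fin: "finite V" using tri by (simp add: tri_def)
  have xV: "x \<in> V" "y \<in> V" "x < y" using ed_in[OF tri e] by auto
  define Z where "Z = {z\<in>V. x < z \<and> z < y \<and> ed V T x z}"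
  obtain w where w: "w \<in> V" "x < w" "w < y" using ex by auto
  define z0 where "z0 = Min {z\<in>V. x < z}"
  have fz: "finite {z\<in>V. x < z}" using fin by simp
  have nez: "{z\<in>V. x < z} \<noteq> {}" using w by auto
  have z0: "z0 \<in> V" "x < z0" using Min_in[OF fz nez] unfolding z0_def by auto
  have z0m: "\<forall>z\<in>V. x < z \<longrightarrow> z0 \<le> z" using Min_le[OF fz] unfolding z0_def by auto
  have "sd V x z0" unfolding sd_def using z0 z0m xV by force
  then have "z0 \<in> Z" unfolding Z_def ed_def using z0 z0m w by force
  have fZ: "finite Z" using fin unfolding Z_def by simp
  define z where "z = Max Z"
  have zZ: "z \<in> Z" using Max_in[OF fZ] \<open>z0 \<in> Z\<close> unfolding z_def by auto
  have zm: "\<forall>z'\<in>Z. z' \<le> z" using Max_ge[OF fZ] unfolding z_def by auto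
  show ?thesis
  proof (cases "ed V T z y")
    case True
    then show ?thesis using zZ unfolding Z_def by auto
  next
    case False
    have dgzy: "dg V z y" using False zZ xV unfolding Z_def dg_def ed_def by auto
    have xz: "ed V T x z" using zZ unfolding Z_def by auto
    have "(z, y) \<in> T"
    proof (rule tri_max[OF tri dgzy], clarify)
      fix u v assume uv: "(u, v) \<in> T" "crosses (z, y) (u, v)"
      have nc1: "\<not> crosses (x, y) (u, v)" using ed_nc[OF tri e uv(1)] .
      have nc2: "\<not> crosses (x, z) (u, v)" using ed_nc[OF tri xz uv(1)] .
      have uvd: "dg V u v" using tri_dg[OF tri uv(1)] .
      have zlt: "x < z" "z < y" using zZ unfolding Z_def by auto
      from uv(2) have "(z < u \<and> u < y \<and> y < v) \<or> (u < z \<and> z < v \<and> v < y)"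
        by (auto simp: crosses_def)
      then show False
      proof
        assume "z < u \<and> u < y \<and> y < v"
        then show False using nc1 zlt by (auto simp: crosses_def)
      next
        assume A: "u < z \<and> z < v \<and> v < y"
        consider "u < x" | "u = x" | "x < u" by linarith
        then show False
        proof cases
          case 1 then show ?thesis using nc1 A zlt by (auto simp: crosses_def)
        next
          case 2
          then have "v \<in> Z" using uvd uv(1) A zlt unfolding Z_def dg_def ed_def by auto
          then show ?thesis using zm A by force
        next
          case 3 then show ?thesis using nc2 A zlt by (auto simp: crosses_def)
        qed
      qed
    qed
    then show ?thesis using False unfolding ed_def by auto
  qed
qed




lemma trsI: "a < b \<Longrightarrow> b < c \<Longrightarrow> ed V T a b \<Longrightarrow> ed V T b c \<Longrightarrow> ed V T a c \<Longrightarrow> (a, b, c) \<in> trs V T"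
  by (simp add: trs_def)

lemma side_tri_aux:
  assumes tri: "tri V T"
  shows "y - x = n \<Longrightarrow> ed V T x y \<Longrightarrow> (\<exists>z\<in>V. x < z \<and> z < y) \<Longrightarrow> s \<in> V \<Longrightarrow> s' \<in> V \<Longrightarrow>
    x \<le> s \<Longrightarrow> s < s' \<Longrightarrow> s' \<le> y \<Longrightarrow> (\<forall>w\<in>V. \<not> (s < w \<and> w < s')) \<Longrightarrow>
    \<exists>t\<in>trs V T. s \<in> {fst t, fst (snd t), snd (snd t)} \<and> s' \<in> {fst t, fst (snd t), snd (snd t)}"
proof (induction n arbitrary: x y rule: less_induct)
  case (less n)
  obtain z where z: "z \<in> V" "x < z" "z < y" "ed V T x z" "ed V T z y"
    using apex[OF tri less.prems(2,3)] by blast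
  have t: "(x, z, y) \<in> trs V T" using z less.prems(2) by (intro trsI) auto
  consider "s' \<le> z" | "z \<le> s" using less.prems(9) z(1) by fastforce
  then show ?case
  proof cases
    case 1
    show ?thesis
    proof (cases "x = s \<and> z = s'")
      case True then show ?thesis using t by force
    next
      case False
      then have "\<exists>w\<in>V. x < w \<and> w < z" using 1 less.prems by (metis le_neq_implies_less order.strict_trans1 order.strict_trans2)
      moreover have "z - x < n" using less.prems(1) z by auto
      ultimately show ?thesis using less.IH[OF _ refl z(4) _ less.prems(4,5,6,7) 1 less.prems(9)] by blast
    qed
  next
    case 2
    show ?thesis
    proof (cases "z = s \<and> y = s'")
      case True then show ?thesis using t by force
    next
      case False
      then have "\<exists>w\<in>V. z < w \<and> w < y" using 2 less.prems by (metis le_neq_implies_less order.strict_trans1 order.strict_trans2)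
      moreover have "y - z < n" using less.prems(1) z by auto
      ultimately show ?thesis using less.IH[OF _ refl z(5) _ less.prems(4,5) 2 less.prems(7,8,9)] by blast
    qed
  qed
qed

lemma mid_exists:
  assumes "finite V" "3 \<le> card V"
  shows "\<exists>z\<in>V. Min V < z \<and> z < Max V"
proof -
  have ne: "V \<noteq> {}" using assms by auto
  have "card (V - {Min V, Max V}) \<ge> 1"
  proof -
    have "card (V - {Min V, Max V}) \<ge> card V - card {Min V, Max V}" by (rule diff_card_le_card_Diff) simp
    moreover have "card {Min V, Max V} \<le> 2" by (simp add: card_insert_if)
    ultimately show ?thesis using assms by linarith
  qed
  then obtain z where "z \<in> V" "z \<noteq> Min V" "z \<noteq> Max V"
    by (metis Diff_iff card_0_eq empty_iff finite_Diff insert_iff assms(1) not_one_le_zero subsetI subset_empty)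
  moreover have "Min V \<le> z" "z \<le> Max V" using Min_le[OF assms(1)] Max_ge[OF assms(1)] \<open>z \<in> V\<close> by auto
  ultimately show ?thesis by (intro bexI[of _ z]) auto
qed

lemma side_tri:
  assumes tri: "tri V T" and s: "s \<in> V" "s' \<in> V" "s < s'" "\<forall>w\<in>V. \<not> (s < w \<and> w < s')"
  shows "\<exists>t\<in>trs V T. s \<in> {fst t, fst (snd t), snd (snd t)} \<and> s' \<in> {fst t, fst (snd t), snd (snd t)}"
proof -
  have fin: "finite V" and c3: "3 \<le> card V" using tri by (auto simp: tri_def)
  have ne: "V \<noteq> {}" using s by auto
  have e: "ed V T (Min V) (Max V)"
    unfolding ed_def sd_def using Min_in[OF fin ne] Max_in[OF fin ne] Min_le[OF fin] Max_ge[OF fin] mid_exists[OF fin c3]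
    by force
  show ?thesis
    by (rule side_tri_aux[OF tri refl e mid_exists[OF fin c3] s(1,2) _ s(3) _ s(4)])
       (use Min_le[OF fin] Max_ge[OF fin] s in auto)
qed

lemma dg_card4:
  assumes "finite V" "dg V a b" shows "4 \<le> card V"
proof -
  from assms(2) obtain c d where cd: "c \<in> V" "a < c" "c < b" "d \<in> V" "\<not> (a \<le> d \<and> d \<le> b)" "a \<in> V" "b \<in> V" "a < b"
    unfolding dg_def sd_def by blast
  have "{a, b, c, d} \<subseteq> V" using cd by auto
  moreover have "card {a, b, c, d} = 4" using cd by auto
  ultimately show ?thesis using card_mono[OF assms(1)] by metis
qed




lemma exists_dg:
  assumes fin: "finite V" and c4: "4 \<le> card V"
  shows "\<exists>a c. dg V a c"
proof -
  have ne: "V \<noteq> {}" using c4 by auto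
  define V' where "V' = V - {Min V, Max V}"
  have "card V' \<ge> card V - card {Min V, Max V}" unfolding V'_def by (rule diff_card_le_card_Diff) simp
  moreover have "card {Min V, Max V} \<le> 2" by (simp add: card_insert_if)
  ultimately have c2: "card V' \<ge> 2" using c4 by linarith
  have fV': "finite V'" using fin unfolding V'_def by simp
  have neV': "V' \<noteq> {}" using c2 by auto
  have "Min V' \<noteq> Max V'"
  proof
    assume eq: "Min V' = Max V'"
    have "V' \<subseteq> {Min V'}" using Min_le[OF fV'] Max_ge[OF fV'] eq by (auto intro: antisym)
    then have "card V' \<le> card {Min V'}" by (intro card_mono) auto
    then have "card V' \<le> 1" by simp
    then show False using c2 by simp
  qed
  then have bc: "Min V' < Max V'" using Min_le[OF fV' Max_in[OF fV' neV']] by simp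
  define b where "b = Min V'" 
  define c where "c = Max V'"
  have bV: "b \<in> V'" "c \<in> V'" unfolding b_def c_def using Min_in[OF fV' neV'] Max_in[OF fV' neV'] by auto
  have "Min V \<in> V" "Max V \<in> V" using Min_in[OF fin ne] Max_in[OF fin ne] by auto
  moreover have bV2: "b \<in> V" "b \<noteq> Min V" "c \<in> V" "c \<noteq> Max V" using bV unfolding V'_def by auto
  moreover have "Min V < b" using Min_le[OF fin bV2(1)] bV2(2) by simp
  moreover have "c < Max V" using Max_ge[OF fin bV2(3)] bV2(4) by simp
  moreover have "b < c" using bc unfolding b_def c_def .
  ultimately have "dg V (Min V) c"
    unfolding dg_def sd_def by (metis leD order.strict_trans)
  then show ?thesis by blast
qed

lemma tri_ne:
  assumes tri: "tri V T" and c4: "4 \<le> card V" shows "T \<noteq> {}"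
proof
  assume e: "T = {}"
  obtain a c where d: "dg V a c" using exists_dg[OF tri_fin[OF tri] c4] by blast
  have "ncd V {(a, c)}" using d by (auto simp: ncd_def crosses_self)
  then have "{(a, c)} = T" using tri e unfolding tri_def by blast
  then show False using e by simp
qed

definition btw :: "nat set \<Rightarrow> nat \<Rightarrow> nat \<Rightarrow> nat set" where
  "btw V x y = {z \<in> V. x < z \<and> z < y}"

lemma ear_exists:
  assumes tri: "tri V T" and c4: "4 \<le> card V"
  shows "\<exists>x v y. x \<in> V \<and> v \<in> V \<and> y \<in> V \<and> x < v \<and> v < y \<and> (\<forall>w\<in>V. \<not> (x < w \<and> w < v))
     \<and> (\<forall>w\<in>V. \<not> (v < w \<and> w < y)) \<and> (x, y) \<in> T \<and> cnt V T v = 1"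
proof -
  have fin: "finite V" using tri by (simp add: tri_def)
  obtain d0 where "d0 \<in> T" using tri_ne[OF tri c4] by blast
  then obtain d where d: "d \<in> T" and dmin: "\<forall>d'\<in>T. card (btw V (fst d) (snd d)) \<le> card (btw V (fst d') (snd d'))"
    using ex_has_least_nat[of "\<lambda>d. d \<in> T" d0 "\<lambda>d. card (btw V (fst d) (snd d))"] by blast
  obtain x y where xy: "d = (x, y)" by (cases d)
  have xyT: "(x, y) \<in> T" using d xy by simp
  have dxy: "dg V x y" using tri_dg[OF tri xyT] .
  have mn: "\<And>u v. (u, v) \<in> T \<Longrightarrow> card (btw V x y) \<le> card (btw V u v)" using dmin xy by fastforce
  have exz: "\<exists>z\<in>V. x < z \<and> z < y" using dxy unfolding dg_def sd_def by blast
  obtain z where z: "z \<in> V" "x < z" "z < y" "ed V T x z" "ed V T z y"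
    using apex[OF tri _ exz] xyT by (auto simp: ed_def)
  have sub1: "btw V x z \<subset> btw V x y" using z unfolding btw_def by auto
  have sub2: "btw V z y \<subset> btw V x y" using z unfolding btw_def by auto
  have fb: "finite (btw V x y)" using fin unfolding btw_def by simp
  have "(x, z) \<notin> T" using mn[of x z] psubset_card_mono[OF fb sub1] by linarith
  then have sxz: "sd V x z" using z(4) by (simp add: ed_def)
  have "(z, y) \<notin> T" using mn[of z y] psubset_card_mono[OF fb sub2] by linarith
  then have szy: "sd V z y" using z(5) by (simp add: ed_def)
  have xyV: "x \<in> V" "y \<in> V" using dxy by (auto simp: dg_def)
  have c1: "\<forall>w\<in>V. \<not> (x < w \<and> w < z)" using sxz xyV z unfolding sd_def by force
  have c2: "\<forall>w\<in>V. \<not> (z < w \<and> w < y)" using szy xyV z unfolding sd_def by force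
  have left: "a = x" if "ed V T a z" for a
  proof -
    have a: "a \<in> V" "a < z" using ed_in[OF tri that] by auto
    show ?thesis
    proof (cases "sd V a z")
      case True
      then show ?thesis using a c1 xyV z unfolding sd_def by (metis leD linorder_neqE_nat)
    next
      case False
      then have aT: "(a, z) \<in> T" using that by (simp add: ed_def)
      have "\<not> crosses (x, y) (a, z)" using tri_nc[OF tri xyT aT] .
      then have "\<not> a < x" using z unfolding crosses_def by auto
      moreover have "a \<noteq> x" using aT sxz tri_dg[OF tri] unfolding dg_def by auto
      ultimately show ?thesis using a c1 by (meson linorder_neqE_nat)
    qed
  qed
  have right: "b = y" if "ed V T z b" for b
  proof -
    have b: "b \<in> V" "z < b" using ed_in[OF tri that] by auto
    show ?thesis
    proof (cases "sd V z b")
      case True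
      then show ?thesis using b c2 xyV z unfolding sd_def by (metis leD linorder_neqE_nat)
    next
      case False
      then have bT: "(z, b) \<in> T" using that by (simp add: ed_def)
      have "\<not> crosses (x, y) (z, b)" using tri_nc[OF tri xyT bT] .
      then have "\<not> y < b" using z unfolding crosses_def by auto
      moreover have "b \<noteq> y" using bT szy tri_dg[OF tri] unfolding dg_def by auto
      ultimately show ?thesis using b c2 by (meson linorder_neqE_nat)
    qed
  qed
  have "{(a, b, c) \<in> trs V T. z \<in> {a, b, c}} = {(x, z, y)}"
  proof (rule set_eqI, rule iffI)
    fix t assume "t \<in> {(a, b, c) \<in> trs V T. z \<in> {a, b, c}}"
    then obtain a b c where t: "t = (a, b, c)" "a < b" "b < c" "ed V T a b" "ed V T b c" "ed V T a c" "z \<in> {a, b, c}"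
      unfolding trs_def by auto
    show "t \<in> {(x, z, y)}"
      using t left right by auto
  next
    fix t assume "t \<in> {(x, z, y)}"
    then show "t \<in> {(a, b, c) \<in> trs V T. z \<in> {a, b, c}}"
      using z xyT by (auto simp: trs_def ed_def)
  qed
  then have "cnt V T z = 1" by (simp add: cnt_def)
  then show ?thesis using xyV z c1 c2 xyT by blast
qed




lemma card4_out:
  fixes V :: "nat set"
  assumes fin: "finite V" and c4: "4 \<le> card V" and V: "x \<in> V" "v \<in> V" "y \<in> V" "x < v" "v < y"
    and c1: "\<forall>w\<in>V. \<not> (x < w \<and> w < v)" and c2: "\<forall>w\<in>V. \<not> (v < w \<and> w < y)"
  shows "\<exists>w\<in>V. \<not> (x \<le> w \<and> w \<le> y)"
proof (rule ccontr)
  assume "\<not> ?thesis"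
  then have all: "\<forall>w\<in>V. x \<le> w \<and> w \<le> y" by blast
  have "V \<subseteq> {x, v, y}"
  proof
    fix w assume w: "w \<in> V"
    consider "w < v" | "w = v" | "v < w" using less_linear by blast
    then show "w \<in> {x, v, y}"
    proof cases
      case 1
      have "x \<le> w" using all w by blast
      moreover have "\<not> x < w" using c1 w 1 by blast
      ultimately show ?thesis by simp
    next
      case 2 then show ?thesis by simp
    next
      case 3
      have "w \<le> y" using all w by blast
      moreover have "\<not> w < y" using c2 w 3 by blast
      ultimately show ?thesis by simp
    qed
  qed
  then have "card V \<le> card {x, v, y}" by (intro card_mono) auto
  also have "\<dots> \<le> 3" by (simp add: card_insert_if)
  finally show False using c4 by simp
qed

lemma ear_other:
  assumes tri: "tri V T" and c4: "4 \<le> card V" and V: "x \<in> V" "v \<in> V" "y \<in> V" "x < v" "v < y"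
    and c1: "\<forall>w\<in>V. \<not> (x < w \<and> w < v)" and c2: "\<forall>w\<in>V. \<not> (v < w \<and> w < y)"
    and cn: "cnt V T v = 1"
  shows "(x, y) \<in> T" "(x, v, y) \<in> trs V T"
proof -
  obtain t1 where t1: "t1 \<in> trs V T" "x \<in> {fst t1, fst (snd t1), snd (snd t1)}" "v \<in> {fst t1, fst (snd t1), snd (snd t1)}"
    using side_tri[OF tri V(1,2,4) c1] by blast
  obtain t2 where t2: "t2 \<in> trs V T" "v \<in> {fst t2, fst (snd t2), snd (snd t2)}" "y \<in> {fst t2, fst (snd t2), snd (snd t2)}"
    using side_tri[OF tri V(2,3,5) c2] by blast
  have "card {(a, b, c) \<in> trs V T. v \<in> {a, b, c}} = 1" using cn by (simp add: cnt_def)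
  then obtain t0 where "{(a, b, c) \<in> trs V T. v \<in> {a, b, c}} = {t0}" using card_1_singletonE by blast
  moreover have "t1 \<in> {(a, b, c) \<in> trs V T. v \<in> {a, b, c}}" "t2 \<in> {(a, b, c) \<in> trs V T. v \<in> {a, b, c}}"
    using t1 t2 by (auto split: prod.splits)
  ultimately have "t1 = t2" by auto
  then obtain a b c where abc: "t1 = (a, b, c)" "a < b" "b < c" "ed V T a b" "ed V T b c" "ed V T a c"
    "x \<in> {a, b, c}" "v \<in> {a, b, c}" "y \<in> {a, b, c}" using t1 t2 unfolding trs_def by auto
  have "a = x" "b = v" "c = y" using abc V by auto
  then have exy: "ed V T x y" and tt: "(x, v, y) \<in> trs V T" using abc t1 by auto
  show "(x, v, y) \<in> trs V T" by fact
  have "\<not> sd V x y"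
    using card4_out[OF tri_fin[OF tri] c4 V c1 c2] V unfolding sd_def by auto
  then show "(x, y) \<in> T" using exy by (simp add: ed_def)
qed

lemma sd_remove:
  assumes V: "x \<in> V" "v \<in> V" "y \<in> V" "x < v" "v < y"
    and c1: "\<forall>w\<in>V. \<not> (x < w \<and> w < v)" and c2: "\<forall>w\<in>V. \<not> (v < w \<and> w < y)"
  shows "sd (V - {v}) a b \<longleftrightarrow> (sd V a b \<and> a \<noteq> v \<and> b \<noteq> v) \<or> (a = x \<and> b = y)"
proof
  assume s: "sd (V - {v}) a b"
  then have ab: "a \<in> V" "b \<in> V" "a \<noteq> v" "b \<noteq> v" "a < b" unfolding sd_def by auto
  from s consider "\<forall>z\<in>V - {v}. \<not> (a < z \<and> z < b)" | "\<forall>z\<in>V - {v}. a \<le> z \<and> z \<le> b" unfolding sd_def by blast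
  then show "(sd V a b \<and> a \<noteq> v \<and> b \<noteq> v) \<or> (a = x \<and> b = y)"
  proof cases
    case 1
    show ?thesis
    proof (cases "a < v \<and> v < b")
      case True
      have "\<not> a < x"
      proof
        assume "a < x"
        then have "x \<in> V - {v}" "a < x" "x < b" using V True by auto
        then show False using 1 by blast
      qed
      moreover have "\<not> x < a" using c1 ab True by auto
      ultimately have "a = x" by simp
      have "\<not> y < b"
      proof
        assume "y < b"
        then have "y \<in> V - {v}" "a < y" "y < b" using V True by auto
        then show False using 1 by blast
      qed
      moreover have "\<not> b < y" using c2 ab True by auto
      ultimately have "b = y" by simp
      with \<open>a = x\<close> show ?thesis by simp
    next
      case False
      then have "\<forall>z\<in>V. \<not> (a < z \<and> z < b)" using 1 by auto
      then show ?thesis using ab unfolding sd_def by auto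
    qed
  next
    case 2
    then have "a \<le> x" "y \<le> b" using V by auto
    have "\<forall>z\<in>V. a \<le> z \<and> z \<le> b"
    proof
      fix z assume z: "z \<in> V"
      show "a \<le> z \<and> z \<le> b"
      proof (cases "z = v")
        case True then show ?thesis using \<open>a \<le> x\<close> \<open>y \<le> b\<close> V by simp
      next
        case False then show ?thesis using 2 z by simp
      qed
    qed
    then show ?thesis using ab unfolding sd_def by auto
  qed
next
  assume "(sd V a b \<and> a \<noteq> v \<and> b \<noteq> v) \<or> (a = x \<and> b = y)"
  then show "sd (V - {v}) a b"
  proof
    assume "sd V a b \<and> a \<noteq> v \<and> b \<noteq> v"
    then show ?thesis unfolding sd_def by auto
  next
    assume "a = x \<and> b = y"
    moreover have "\<forall>z\<in>V - {v}. \<not> (x < z \<and> z < y)"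
    proof (intro ballI notI)
      fix z assume z: "z \<in> V - {v}" "x < z \<and> z < y"
      consider "z < v" | "v < z" using z less_linear by blast
      then show False using z c1 c2 by cases auto
    qed
    ultimately show ?thesis using V unfolding sd_def by auto
  qed
qed




lemma ear_remove:
  assumes tri: "tri V T" and c4: "4 \<le> card V" and V: "x \<in> V" "v \<in> V" "y \<in> V" "x < v" "v < y"
    and c1: "\<forall>w\<in>V. \<not> (x < w \<and> w < v)" and c2: "\<forall>w\<in>V. \<not> (v < w \<and> w < y)"
    and xyT: "(x, y) \<in> T" and cn: "cnt V T v = 1"
  shows "tri (V - {v}) (T - {(x, y)})" "trs (V - {v}) (T - {(x, y)}) = trs V T - {(x, v, y)}"
    "(x, v, y) \<in> trs V T"
proof -
  have fin: "finite V" using tri by (simp add: tri_def)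
  have t0: "(x, v, y) \<in> trs V T" using ear_other[OF tri c4 V c1 c2 cn] by simp
  show "(x, v, y) \<in> trs V T" by fact
  have cset: "card {(a, b, c) \<in> trs V T. v \<in> {a, b, c}} = 1" using cn by (simp add: cnt_def)
  have ftr: "finite {(a, b, c) \<in> trs V T. v \<in> {a, b, c}}" by (rule finite_subset[OF _ trs_fin[OF tri]]) auto
  have only: "t = (x, v, y)" if "t \<in> trs V T" "v \<in> {fst t, fst (snd t), snd (snd t)}" for t
  proof -
    define S where "S = {(a, b, c) \<in> trs V T. v \<in> {a, b, c}}"
    have "t \<in> S" using that unfolding S_def by (cases t) auto
    moreover have "(x, v, y) \<in> S" using t0 unfolding S_def by simp
    moreover obtain t0 where "S = {t0}" using card_1_singletonE[OF cset[folded S_def]] by blast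
    ultimately show ?thesis by simp
  qed
  have svy: "sd V v y" using V c2 unfolding sd_def by blast
  have sxv: "sd V x v" using V c1 unfolding sd_def by blast
  have noR: "(v, q) \<notin> T" for q
  proof
    assume vq: "(v, q) \<in> T"
    have d: "dg V v q" using tri_dg[OF tri vq] .
    have "q \<noteq> y" using d svy unfolding dg_def by auto
    have qV: "v < q" "q \<in> V" using d unfolding dg_def by auto
    have "\<not> q < y" using c2 qV by blast
    then have yq: "y < q" using \<open>q \<noteq> y\<close> by simp
    have evq: "ed V T v q" using vq by (simp add: ed_def)
    have exz: "\<exists>z\<in>V. v < z \<and> z < q" using V yq by blast
    obtain z where z: "z \<in> V" "v < z" "z < q" "ed V T v z" "ed V T z q"
      using apex[OF tri evq exz] by blast
    have "(v, z, q) \<in> trs V T" using z evq by (auto simp: trs_def)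
    then have "(v, z, q) = (x, v, y)" using only[of "(v, z, q)"] by simp
    then show False using V by simp
  qed
  have noL: "(q, v) \<notin> T" for q
  proof
    assume vq: "(q, v) \<in> T"
    have d: "dg V q v" using tri_dg[OF tri vq] .
    have "q \<noteq> x" using d sxv unfolding dg_def by auto
    have qV: "q < v" "q \<in> V" using d unfolding dg_def by auto
    have "\<not> x < q" using c1 qV by blast
    then have yq: "q < x" using \<open>q \<noteq> x\<close> by simp
    have evq: "ed V T q v" using vq by (simp add: ed_def)
    have exz: "\<exists>z\<in>V. q < z \<and> z < v" using V yq by blast
    obtain z where z: "z \<in> V" "q < z" "z < v" "ed V T q z" "ed V T z v"
      using apex[OF tri evq exz] by blast
    have "(q, z, v) \<in> trs V T" using z evq by (auto simp: trs_def)
    then have "(q, z, v) = (x, v, y)" using only[of "(q, z, v)"] by simp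
    then show False using V by simp
  qed
  have sdr: "sd (V - {v}) a b \<longleftrightarrow> (sd V a b \<and> a \<noteq> v \<and> b \<noteq> v) \<or> (a = x \<and> b = y)" for a b
    using sd_remove[OF V c1 c2] .
  have edr: "ed (V - {v}) (T - {(x, y)}) a b \<longleftrightarrow> ed V T a b \<and> a \<noteq> v \<and> b \<noteq> v" for a b
    unfolding ed_def sdr using noR noL xyT V by auto
  have atv1: "a = x" if e: "ed V T a v" for a
  proof -
    have s1: "sd V a v" using e noL by (auto simp: ed_def)
    have a: "a < v" "a \<in> V" using ed_in[OF tri e] by auto
    have "\<not> (\<forall>z\<in>V. a \<le> z \<and> z \<le> v)" using V by force
    then have cons: "\<forall>z\<in>V. \<not> (a < z \<and> z < v)" using s1 unfolding sd_def by blast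
    have "\<not> a < x" using cons V by blast
    moreover have "\<not> x < a" using c1 a by blast
    ultimately show "a = x" by simp
  qed
  have atv2: "b = y" if e: "ed V T v b" for b
  proof -
    have s1: "sd V v b" using e noR by (auto simp: ed_def)
    have b: "v < b" "b \<in> V" using ed_in[OF tri e] by auto
    have "\<not> (\<forall>z\<in>V. v \<le> z \<and> z \<le> b)" using V by force
    then have cons: "\<forall>z\<in>V. \<not> (v < z \<and> z < b)" using s1 unfolding sd_def by blast
    have "\<not> y < b" using cons V by blast
    moreover have "\<not> b < y" using c2 b by blast
    ultimately show "b = y" by simp
  qed
  show trs_eq: "trs (V - {v}) (T - {(x, y)}) = trs V T - {(x, v, y)}"
  proof (rule set_eqI)
    fix t :: "nat \<times> nat \<times> nat"
    obtain a b c where t: "t = (a, b, c)" by (cases t)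
    have "(a, b, c) \<in> trs V T \<Longrightarrow> v \<in> {a, b, c} \<Longrightarrow> (a, b, c) = (x, v, y)"
      using only[of "(a, b, c)"] by simp
    then show "t \<in> trs (V - {v}) (T - {(x, y)}) \<longleftrightarrow> t \<in> trs V T - {(x, v, y)}"
    proof -
      assume o: "(a, b, c) \<in> trs V T \<Longrightarrow> v \<in> {a, b, c} \<Longrightarrow> (a, b, c) = (x, v, y)"
      have l: "(a, b, c) \<in> trs (V - {v}) (T - {(x, y)}) \<longleftrightarrow>
        (a < b \<and> b < c \<and> ed V T a b \<and> ed V T b c \<and> ed V T a c) \<and> a \<noteq> v \<and> b \<noteq> v \<and> c \<noteq> v"
        unfolding trs_def edr by blast
      have r: "(a, b, c) \<in> trs V T \<longleftrightarrow> (a < b \<and> b < c \<and> ed V T a b \<and> ed V T b c \<and> ed V T a c)"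
        unfolding trs_def by blast
      show ?thesis unfolding t l
      proof
        assume "(a < b \<and> b < c \<and> ed V T a b \<and> ed V T b c \<and> ed V T a c) \<and> a \<noteq> v \<and> b \<noteq> v \<and> c \<noteq> v"
        then show "(a, b, c) \<in> trs V T - {(x, v, y)}" using r by simp
      next
        assume h: "(a, b, c) \<in> trs V T - {(x, v, y)}"
        then have "v \<notin> {a, b, c}" using o by blast
        then show "(a < b \<and> b < c \<and> ed V T a b \<and> ed V T b c \<and> ed V T a c) \<and> a \<noteq> v \<and> b \<noteq> v \<and> c \<noteq> v"
          using h r by blast
      qed
    qed
  qed
  show "tri (V - {v}) (T - {(x, y)})"
    unfolding tri_def
  proof (intro conjI allI impI)
    show "finite (V - {v})" using fin by simp
    show "3 \<le> card (V - {v})" using c4 V by simp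
    show nc: "ncd (V - {v}) (T - {(x, y)})"
      unfolding ncd_def
    proof (intro conjI ballI)
      fix d assume d: "d \<in> T - {(x, y)}"
      obtain a b where ab: "d = (a, b)" by (cases d)
      have "dg V a b" using tri_dg[OF tri] d ab by auto
      moreover have "a \<noteq> v" "b \<noteq> v" using noR noL d ab by auto
      ultimately show "case d of (a, b) \<Rightarrow> dg (V - {v}) a b"
        unfolding ab dg_def sdr using d ab by auto
    next
      fix d e assume "d \<in> T - {(x, y)}" "e \<in> T - {(x, y)}"
      then show "\<not> crosses d e" using tri_nc[OF tri] by auto
    qed
    fix D assume D: "ncd (V - {v}) D \<and> T - {(x, y)} \<subseteq> D"
    have Ddg: "\<And>a b. (a, b) \<in> D \<Longrightarrow> dg (V - {v}) a b" using D unfolding ncd_def by auto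
    have "ncd V (insert (x, y) D)"
      unfolding ncd_def
    proof (intro conjI ballI)
      fix d assume d: "d \<in> insert (x, y) D"
      obtain a b where ab: "d = (a, b)" by (cases d)
      show "case d of (a, b) \<Rightarrow> dg V a b"
      proof (cases "d = (x, y)")
        case True then show ?thesis using tri_dg[OF tri xyT] by simp
      next
        case False
        then have "dg (V - {v}) a b" using d ab Ddg by auto
        then show ?thesis unfolding ab dg_def sdr by auto
      qed
    next
      have noc: "\<not> crosses (x, y) (a, b)" if "(a, b) \<in> D" for a b
      proof
        assume cr: "crosses (x, y) (a, b)"
        have "dg (V - {v}) a b" using Ddg that .
        then have ab: "a \<in> V" "b \<in> V" "a \<noteq> v" "b \<noteq> v" unfolding dg_def by auto
        from cr have "(x < a \<and> a < y) \<or> (x < b \<and> b < y)" unfolding crosses_def by auto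
        then show False
        proof
          assume "x < a \<and> a < y"
          then show False using ab c1 c2 by (cases "a < v") auto
        next
          assume "x < b \<and> b < y"
          then show False using ab c1 c2 by (cases "b < v") auto
        qed
      qed
      fix d e assume d: "d \<in> insert (x, y) D" and e: "e \<in> insert (x, y) D"
      have DD: "\<forall>d\<in>D. \<forall>e\<in>D. \<not> crosses d e" using D unfolding ncd_def by auto
      show "\<not> crosses d e"
      proof (cases "d = (x, y)")
        case True
        show ?thesis
        proof (cases "e = (x, y)")
          case True then show ?thesis using \<open>d = (x, y)\<close> crosses_self by simp
        next
          case False
          then have "e \<in> D" using e by simp
          then show ?thesis using noc \<open>d = (x, y)\<close> by (cases e) auto
        qed
      next
        case False
        then have dD: "d \<in> D" using d by simp
        show ?thesis
        proof (cases "e = (x, y)")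
          case True then show ?thesis using noc dD crosses_sym by (cases d) auto
        next
          case False
          then have "e \<in> D" using e by simp
          then show ?thesis using DD dD by blast
        qed
      qed
    qed
    moreover have "T \<subseteq> insert (x, y) D" using D by auto
    ultimately have eq: "insert (x, y) D = T" using tri unfolding tri_def by blast
    have "(x, y) \<notin> D" using Ddg[of x y] sdr[of x y] unfolding dg_def by auto
    then show "D = T - {(x, y)}" using eq by auto
  qed
qed

lemma dg_card4': "tri V T \<Longrightarrow> (a, b) \<in> T \<Longrightarrow> 4 \<le> card V"
  by (rule dg_card4[OF tri_fin tri_dg])




theorem tri_unique:
  "tri V T \<Longrightarrow> tri V T' \<Longrightarrow> (\<forall>w\<in>V. cnt V T w = cnt V T' w) \<Longrightarrow> T = T'"
proof (induction "card V" arbitrary: V T T' rule: less_induct)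
  case less
  show ?case
  proof (cases "4 \<le> card V")
    case False
    then have "T = {}" "T' = {}" using dg_card4'[OF less.prems(1)] dg_card4'[OF less.prems(2)] by fastforce+
    then show ?thesis by simp
  next
    case True
    obtain x v y where e: "x \<in> V" "v \<in> V" "y \<in> V" "x < v" "v < y" "\<forall>w\<in>V. \<not> (x < w \<and> w < v)"
      "\<forall>w\<in>V. \<not> (v < w \<and> w < y)" "(x, y) \<in> T" "cnt V T v = 1"
      using ear_exists[OF less.prems(1) True] by blast
    have c': "cnt V T' v = 1" using e less.prems(3) by auto
    have xy': "(x, y) \<in> T'" using ear_other[OF less.prems(2) True e(1-7) c'] by simp
    note R = ear_remove[OF less.prems(1) True e(1-7) e(8,9)]
    note R' = ear_remove[OF less.prems(2) True e(1-7) xy' c']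
    have fin: "finite V" using less.prems(1) by (simp add: tri_def)
    have ft: "finite (trs V T)" "finite (trs V T')" using trs_fin less.prems(1,2) by auto
    have "cnt (V - {v}) (T - {(x, y)}) w = cnt (V - {v}) (T' - {(x, y)}) w" if w: "w \<in> V - {v}" for w
    proof -
      have eq1: "{(a, b, c) \<in> trs V T - {(x, v, y)}. w \<in> {a, b, c}} = {(a, b, c) \<in> trs V T. w \<in> {a, b, c}} - {(x, v, y)}"
        by auto
      have eq2: "{(a, b, c) \<in> trs V T' - {(x, v, y)}. w \<in> {a, b, c}} = {(a, b, c) \<in> trs V T'. w \<in> {a, b, c}} - {(x, v, y)}"
        by auto
      have f1: "finite {(a, b, c) \<in> trs V T. w \<in> {a, b, c}}" by (rule finite_subset[OF _ ft(1)]) auto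
      have f2: "finite {(a, b, c) \<in> trs V T'. w \<in> {a, b, c}}" by (rule finite_subset[OF _ ft(2)]) auto
      have m: "(x, v, y) \<in> {(a, b, c) \<in> trs V T. w \<in> {a, b, c}} \<longleftrightarrow> (x, v, y) \<in> {(a, b, c) \<in> trs V T'. w \<in> {a, b, c}}"
        using R(3) R'(3) by simp
      have "cnt V T w = cnt V T' w" using less.prems(3) w by auto
      then have cc: "card {(a, b, c) \<in> trs V T. w \<in> {a, b, c}} = card {(a, b, c) \<in> trs V T'. w \<in> {a, b, c}}"
        by (simp add: cnt_def)
      show ?thesis
        unfolding cnt_def R(2) R'(2) eq1 eq2 card_Diff_singleton_if m cc ..
    qed
    moreover have "card (V - {v}) < card V" by (rule card_Diff1_less[OF fin e(2)])
    ultimately have "T - {(x, y)} = T' - {(x, y)}" using less.hyps R(1) R'(1) by blast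
    then show ?thesis using e(8) xy' by blast
  qed
qed




lemma sd_link: "sd {0..<N} x y \<longleftrightarrow> is_side N x y"
  unfolding sd_def is_side_def
proof (auto, goal_cases)
  case 1
  then show ?case 
  proof -
    from 1 have h: "\<forall>z<N. x \<le> z \<and> z \<le> y" by auto
    from h[rule_format, of 0] 1 have "x = 0" by auto
    moreover have "N - 1 < N" using 1 by auto
    then have "N - 1 \<le> y" using h by blast
    then have "y = N - 1" using 1 by linarith
    ultimately show ?thesis by simp
  qed
qed


lemma dg_link: "dg {0..<N} x y \<longleftrightarrow> is_diag N x y"
  unfolding dg_def is_diag_def sd_link by auto

lemma ncd_link: "ncd {0..<N} D \<longleftrightarrow> noncrossing_diags N D"
  unfolding ncd_def noncrossing_diags_def dg_link ..

lemma tri_link: "tri {0..<N} T \<longleftrightarrow> triangulation N T"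
  unfolding tri_def triangulation_def ncd_link by simp

lemma ed_link: "ed {0..<N} T x y \<longleftrightarrow> is_edge N T x y"
  unfolding ed_def is_edge_def sd_link ..

lemma trs_link: "trs {0..<N} T = triangles N T"
  unfolding trs_def triangles_def ed_link ..

lemma cnt_link: "w < N \<Longrightarrow> quiddity N T (int w) = int (cnt {0..<N} T w)"
  unfolding quiddity_def cnt_def trs_link by (simp add: nat_mod_as_int)

definition rr :: "nat \<Rightarrow> nat \<Rightarrow> nat \<Rightarrow> nat" where
  "rr N s i = (i + s) mod N"

lemma rr_eq: "i < N \<Longrightarrow> s < N \<Longrightarrow> rr N s i = (if i + s < N then i + s else i + s - N)"
  unfolding rr_def by (auto simp: mod_if)

lemma side_rot:
  assumes "a < N" "b < N" "s < N" "a \<noteq> b"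
  shows "is_side N (min (rr N s a) (rr N s b)) (max (rr N s a) (rr N s b)) \<longleftrightarrow> is_side N (min a b) (max a b)"
  using assms unfolding rr_eq[OF assms(1,3)] rr_eq[OF assms(2,3)] is_side_def
  by (auto simp: min_def max_def split: if_splits)

definition cb :: "nat \<Rightarrow> nat \<Rightarrow> nat \<Rightarrow> bool" where
  "cb a x b \<longleftrightarrow> (a < x \<and> x < b) \<or> (x < b \<and> b < a) \<or> (b < a \<and> a < x)"

lemma cross_cb:
  assumes "a \<noteq> b" "c \<noteq> d"
  shows "crosses (min a b, max a b) (min c d, max c d) \<longleftrightarrow>
    (a \<noteq> c \<and> a \<noteq> d \<and> b \<noteq> c \<and> b \<noteq> d \<and> (cb a c b \<longleftrightarrow> \<not> cb a d b))"
proof (cases "a < b")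
  case True
  then show ?thesis using assms by (cases "c < d") (auto simp: crosses_def cb_def min_def max_def)
next
  case False
  then show ?thesis using assms by (cases "c < d") (auto simp: crosses_def cb_def min_def max_def)
qed

lemma rr_inj: "a < N \<Longrightarrow> b < N \<Longrightarrow> s < N \<Longrightarrow> rr N s a = rr N s b \<longleftrightarrow> a = b"
  by (auto simp: rr_eq split: if_splits)

lemma rr_lt: "0 < N \<Longrightarrow> rr N s a < N"
  by (simp add: rr_def)

lemma cb_rot:
  assumes "a < N" "x < N" "b < N" "s < N"
  shows "cb (rr N s a) (rr N s x) (rr N s b) \<longleftrightarrow> cb a x b"
  using assms unfolding rr_eq[OF assms(1,4)] rr_eq[OF assms(2,4)] rr_eq[OF assms(3,4)] cb_def
  by (auto split: if_splits)

lemma cross_rot: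
  assumes "a < N" "b < N" "c < N" "d < N" "s < N" "a \<noteq> b" "c \<noteq> d"
  shows "crosses (min (rr N s a) (rr N s b), max (rr N s a) (rr N s b)) (min (rr N s c) (rr N s d), max (rr N s c) (rr N s d))
     \<longleftrightarrow> crosses (min a b, max a b) (min c d, max c d)"
proof -
  have n1: "rr N s a \<noteq> rr N s b" "rr N s c \<noteq> rr N s d" using rr_inj assms by auto
  show ?thesis
    unfolding cross_cb[OF n1] cross_cb[OF assms(6,7)] cb_rot[OF assms(1,3,2,5)] cb_rot[OF assms(1,4,2,5)]
    using rr_inj assms by auto
qed




lemma rr_inv: "i < N \<Longrightarrow> s < N \<Longrightarrow> rr N ((N - s) mod N) (rr N s i) = i"
proof -
  assume a: "i < N" "s < N"
  have "rr N ((N - s) mod N) (rr N s i) = ((i + s) mod N + (N - s) mod N) mod N" by (simp add: rr_def)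
  also have "\<dots> = (i + s + (N - s)) mod N" by (simp add: mod_add_eq)
  also have "\<dots> = (i + N) mod N" using a by simp
  also have "\<dots> = i" using a by simp
  finally show ?thesis .
qed

lemma sinv_lt: assumes "s < (N::nat)" shows "(N - s) mod N < N"
  using assms by (intro mod_less_divisor) simp

lemma sinv_inv: "s < (N::nat) \<Longrightarrow> (N - (N - s) mod N) mod N = s"
  by (cases "s = 0") (auto simp: mod_if)

lemma rotate_sp: "rotate N s (min a b, max a b) = (min (rr N s a) (rr N s b), max (rr N s a) (rr N s b))"
  unfolding rotate_def rr_def by (cases "a \<le> b") (auto simp: min_def max_def)

lemma rotate_pair: "rotate N s (x, y) = (min (rr N s x) (rr N s y), max (rr N s x) (rr N s y))"
  unfolding rotate_def rr_def by simp

lemma min_max_img: fixes f :: "nat \<Rightarrow> nat" shows "min (f (min p q)) (f (max p q)) = min (f p) (f (q::nat))" (is ?A)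
  "max (f (min p q)) (f (max p q)) = max (f p) (f q)" (is ?B)
proof -
  have "?A \<and> ?B"
  proof (cases "p \<le> q")
    case True then have "min p q = p" "max p q = q" by auto
    then show ?thesis by simp
  next
    case False then have "min p q = q" "max p q = p" by auto
    moreover have "min (f q) (f p) = min (f p) (f q)" "max (f q) (f p) = max (f p) (f q)"
      by (rule min.commute, rule max.commute)
    ultimately show ?thesis by simp
  qed
  then show ?A ?B by auto
qed

lemma rotate_inv:
  assumes "x < N" "y < N" "s < N"
  shows "rotate N ((N - s) mod N) (rotate N s (x, y)) = (min x y, max x y)"
  unfolding rotate_pair min_max_img[of "rr N ((N - s) mod N)"] rr_inv[OF assms(1,3)] rr_inv[OF assms(2,3)] ..

lemma diag_rot:
  assumes "is_diag N x y" "s < N"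
  shows "is_diag N (fst (rotate N s (x, y))) (snd (rotate N s (x, y)))"
proof -
  have xy: "x < y" "y < N" "\<not> is_side N x y" using assms by (auto simp: is_diag_def)
  have n: "rr N s x \<noteq> rr N s y" using rr_inj[of x N y s] xy assms by auto
  have "rr N s x < N" "rr N s y < N" using rr_lt xy by auto
  moreover have "\<not> is_side N (min (rr N s x) (rr N s y)) (max (rr N s x) (rr N s y))"
    using side_rot[of x N y s] xy assms by (simp add: min_def max_def)
  ultimately show ?thesis using n unfolding rotate_pair is_diag_def by (auto simp: min_def max_def)
qed

lemma ncd_rot:
  assumes nc: "noncrossing_diags N D" and s: "s < N"
  shows "noncrossing_diags N (rotate N s ` D)"
  unfolding noncrossing_diags_def
proof (intro conjI ballI)
  fix e assume "e \<in> rotate N s ` D"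
  then obtain x y where "(x, y) \<in> D" "e = rotate N s (x, y)" by auto
  moreover have "is_diag N x y" using nc calculation by (auto simp: noncrossing_diags_def)
  ultimately show "case e of (x, y) \<Rightarrow> is_diag N x y" using diag_rot[OF _ s] by (cases e) force
next
  fix d e assume d: "d \<in> rotate N s ` D" and e: "e \<in> rotate N s ` D"
  obtain x y where xy: "(x, y) \<in> D" "d = rotate N s (x, y)" using d by auto
  obtain u v where uv: "(u, v) \<in> D" "e = rotate N s (u, v)" using e by auto
  have dx: "is_diag N x y" "is_diag N u v" using nc xy uv by (auto simp: noncrossing_diags_def)
  then have o: "x < y" "y < N" "u < v" "v < N" by (auto simp: is_diag_def)
  have "\<not> crosses (x, y) (u, v)" using nc xy uv by (auto simp: noncrossing_diags_def)
  then have "\<not> crosses (min x y, max x y) (min u v, max u v)" using o by (simp add: min_def max_def)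
  then show "\<not> crosses d e" unfolding xy(2) uv(2) rotate_pair
    using cross_rot[of x N y u v s] o s by simp
qed

lemma rot_rot_set:
  assumes nc: "noncrossing_diags N D" and s: "s < N"
  shows "rotate N ((N - s) mod N) ` rotate N s ` D = D"
proof -
  have "rotate N ((N - s) mod N) (rotate N s d) = d" if "d \<in> D" for d
  proof -
    obtain x y where d: "d = (x, y)" by (cases d)
    have "is_diag N x y" using nc that d by (auto simp: noncrossing_diags_def)
    then have "x < y" "y < N" by (auto simp: is_diag_def)
    then show ?thesis using rotate_inv[of x N y s] s d by simp
  qed
  then show ?thesis by (simp add: image_image)
qed

lemma tri_rot:
  assumes tr: "triangulation N T" and s: "s < N"
  shows "triangulation N (rotate N s ` T)"
proof -
  have nc: "noncrossing_diags N T" and N3: "3 \<le> N" using tr by (auto simp: triangulation_def)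
  define s' where "s' = (N - s) mod N"
  have s': "s' < N" using sinv_lt[OF s] unfolding s'_def .
  have ss: "(N - s') mod N = s" using sinv_inv[OF s] unfolding s'_def .
  show ?thesis
    unfolding triangulation_def
  proof (intro conjI allI impI)
    show "3 \<le> N" by fact
    show "noncrossing_diags N (rotate N s ` T)" using ncd_rot[OF nc s] .
    fix D assume D: "noncrossing_diags N D \<and> rotate N s ` T \<subseteq> D"
    have ncD': "noncrossing_diags N (rotate N s' ` D)" using ncd_rot[OF _ s'] D by blast
    have "T \<subseteq> rotate N s' ` D"
    proof -
      have "rotate N s' ` rotate N s ` T \<subseteq> rotate N s' ` D" using D by blast
      then show ?thesis using rot_rot_set[OF nc s] unfolding s'_def by simp
    qed
    then have "rotate N s' ` D = T" using tr ncD' unfolding triangulation_def by blast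
    then have "rotate N s ` rotate N s' ` D = rotate N s ` T" by simp
    then show "D = rotate N s ` T" using rot_rot_set[OF _ s', of D] D ss by simp
  qed
qed




definition EE :: "nat \<Rightarrow> (nat \<times> nat) set \<Rightarrow> nat \<Rightarrow> nat \<Rightarrow> bool" where
  "EE N T a b \<longleftrightarrow> is_edge N T (min a b) (max a b)"

definition TS :: "nat \<Rightarrow> (nat \<times> nat) set \<Rightarrow> nat \<Rightarrow> nat set set" where
  "TS N T w = {S. S \<subseteq> {..<N} \<and> card S = 3 \<and> w \<in> S \<and> (\<forall>a\<in>S. \<forall>b\<in>S. a \<noteq> b \<longrightarrow> EE N T a b)}"

lemma edge_lt: "is_edge N T a b \<Longrightarrow> noncrossing_diags N T \<Longrightarrow> a < b \<and> b < N"
  by (auto simp: is_edge_def is_side_def noncrossing_diags_def is_diag_def)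

lemma sort3:
  fixes x y z :: nat
  assumes "x \<noteq> y" "y \<noteq> z" "x \<noteq> z"
  shows "\<exists>a b c. a < b \<and> b < c \<and> {x, y, z} = {a, b, c}"
proof -
  consider "x < y" "y < z" | "x < z" "z < y" | "y < x" "x < z" | "y < z" "z < x" | "z < x" "x < y" | "z < y" "y < x"
    using assms by (meson linorder_neqE_nat)
  then show ?thesis
  proof cases
    case 1 then show ?thesis by blast
  next
    case 2 then show ?thesis by (intro exI[of _ x] exI[of _ z] exI[of _ y]) auto
  next
    case 3 then show ?thesis by (intro exI[of _ y] exI[of _ x] exI[of _ z]) auto
  next
    case 4 then show ?thesis by (intro exI[of _ y] exI[of _ z] exI[of _ x]) auto
  next
    case 5 then show ?thesis by (intro exI[of _ z] exI[of _ x] exI[of _ y]) auto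
  next
    case 6 then show ?thesis by (intro exI[of _ z] exI[of _ y] exI[of _ x]) auto
  qed
qed

lemma set3_inj:
  fixes a b c a' b' c' :: nat
  assumes "a < b" "b < c" "a' < b'" "b' < c'" "{a, b, c} = {a', b', c'}"
  shows "a = a' \<and> b = b' \<and> c = c'"
proof -
  have "a = Min {a, b, c}" "c = Max {a, b, c}" using assms(1,2) by (auto simp: Min_insert Max_insert min_def max_def)
  moreover have "a' = Min {a', b', c'}" "c' = Max {a', b', c'}" using assms(3,4) by (auto simp: Min_insert Max_insert min_def max_def)
  moreover have "Min {a, b, c} = Min {a', b', c'}" "Max {a, b, c} = Max {a', b', c'}"
    using arg_cong[OF assms(5), of Min] arg_cong[OF assms(5), of Max] by blast+
  ultimately have ac: "a = a'" "c = c'" by simp_all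
  have "b \<in> {a', b', c'}" using assms(5) by blast
  then show ?thesis using ac assms by auto
qed

lemma card_TS:
  assumes nc: "noncrossing_diags N T"
  shows "card {(a, b, c) \<in> triangles N T. w \<in> {a, b, c}} = card (TS N T w)"
proof -
  let ?A = "{(a, b, c) \<in> triangles N T. w \<in> {a, b, c}}"
  let ?f = "\<lambda>(a, b, c). {a, b, c} :: nat set"
  have "bij_betw ?f ?A (TS N T w)"
    unfolding bij_betw_def
  proof (intro conjI)
    show "inj_on ?f ?A"
    proof (rule inj_onI)
      fix t t' assume t: "t \<in> ?A" "t' \<in> ?A" "?f t = ?f t'"
      obtain a b c where t1: "t = (a, b, c)" by (cases t)
      obtain a' b' c' where t2: "t' = (a', b', c')" by (cases t')
      have "a < b" "b < c" using t(1) t1 by (auto simp: triangles_def)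
      moreover have "a' < b'" "b' < c'" using t(2) t2 by (auto simp: triangles_def)
      moreover have "{a, b, c} = {a', b', c'}" using t(3) unfolding t1 t2 by (simp only: prod.case)
      ultimately have "a = a' \<and> b = b' \<and> c = c'" by (rule set3_inj)
      then show "t = t'" using t1 t2 by simp
    qed
    show "?f ` ?A = TS N T w"
    proof (rule set_eqI, rule iffI)
      fix S assume "S \<in> ?f ` ?A"
      then obtain a b c where abc: "S = {a, b, c}" "a < b" "b < c" "is_edge N T a b" "is_edge N T b c" "is_edge N T a c" "w \<in> {a, b, c}"
        by (auto simp: triangles_def)
      have "c < N" using edge_lt[OF abc(5) nc] by simp
      moreover have "EE N T p q" if "p \<in> S" "q \<in> S" "p \<noteq> q" for p q
        using that abc unfolding EE_def by (auto simp: min_def max_def)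
      ultimately show "S \<in> TS N T w" unfolding TS_def using abc by auto
    next
      fix S assume S: "S \<in> TS N T w"
      then have "card S = 3" by (simp add: TS_def)
      then obtain x y z where xyz: "S = {x, y, z}" "x \<noteq> y" "y \<noteq> z" "x \<noteq> z" by (auto simp: card_3_iff)
      obtain a b c where abc: "a < b" "b < c" "{x, y, z} = {a, b, c}" using sort3[OF xyz(2-4)] by blast
      have Sabc: "S = {a, b, c}" using xyz(1) abc(3) by simp
      have e: "\<And>p q. p \<in> S \<Longrightarrow> q \<in> S \<Longrightarrow> p \<noteq> q \<Longrightarrow> EE N T p q" using S by (auto simp: TS_def)
      have "EE N T a b" "EE N T b c" "EE N T a c"
        using e[of a b] e[of b c] e[of a c] abc(1,2) unfolding Sabc by auto
      then have "is_edge N T a b" "is_edge N T b c" "is_edge N T a c"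
        using abc(1,2) unfolding EE_def by (simp_all add: min_def max_def)
      moreover have "w \<in> {a, b, c}" using S unfolding Sabc by (simp add: TS_def)
      ultimately have "(a, b, c) \<in> ?A" using abc(1,2) by (simp add: triangles_def)
      moreover have "S = ?f (a, b, c)" using Sabc by simp
      ultimately show "S \<in> ?f ` ?A" by (rule rev_image_eqI)
    qed
  qed
  then show ?thesis by (rule bij_betw_same_card)
qed




lemma rot_mem:
  assumes nc: "noncrossing_diags N T" and s: "s < N" and ab: "a < N" "b < N"
  shows "rotate N s (min a b, max a b) \<in> rotate N s ` T \<longleftrightarrow> (min a b, max a b) \<in> T"
proof
  assume "rotate N s (min a b, max a b) \<in> rotate N s ` T"
  then obtain d where d: "d \<in> T" "rotate N s (min a b, max a b) = rotate N s d" by auto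
  obtain u v where uv: "d = (u, v)" by (cases d)
  have "u < v" "v < N" using nc d uv by (auto simp: noncrossing_diags_def is_diag_def)
  then have "rotate N ((N - s) mod N) (rotate N s d) = d" using rotate_inv[of u N v s] s uv by simp
  moreover have "rotate N ((N - s) mod N) (rotate N s (min a b, max a b)) = (min a b, max a b)"
    using rotate_inv[of "min a b" N "max a b" s] s ab by (simp add: min_def max_def)
  ultimately show "(min a b, max a b) \<in> T" using d by metis
qed auto

lemma EE_rot:
  assumes nc: "noncrossing_diags N T" and s: "s < N" and ab: "a < N" "b < N" "a \<noteq> b"
  shows "EE N (rotate N s ` T) (rr N s a) (rr N s b) \<longleftrightarrow> EE N T a b"
  unfolding EE_def is_edge_def side_rot[OF ab(1,2) s ab(3)] rotate_sp[symmetric] rot_mem[OF nc s ab(1,2)] ..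

lemma TS_rot:
  assumes nc: "noncrossing_diags N T" and s: "s < N" and S: "S \<in> TS N T w"
  shows "rr N s ` S \<in> TS N (rotate N s ` T) (rr N s w)"
proof -
  have Sl: "S \<subseteq> {..<N}" "card S = 3" "w \<in> S" and e: "\<And>a b. a \<in> S \<Longrightarrow> b \<in> S \<Longrightarrow> a \<noteq> b \<Longrightarrow> EE N T a b"
    using S by (auto simp: TS_def)
  have inj: "inj_on (rr N s) {..<N}" using rr_inj[of _ N _ s] s by (auto simp: inj_on_def)
  have "rr N s ` S \<subseteq> {..<N}" using rr_lt[of N s] s by auto
  moreover have "card (rr N s ` S) = 3" using card_image[OF inj_on_subset[OF inj Sl(1)]] Sl(2) by simp
  moreover have "rr N s w \<in> rr N s ` S" using Sl(3) by simp
  moreover have "EE N (rotate N s ` T) a' b'" if h: "a' \<in> rr N s ` S" "b' \<in> rr N s ` S" "a' \<noteq> b'" for a' b'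
  proof -
    obtain a b where ab: "a \<in> S" "b \<in> S" "a' = rr N s a" "b' = rr N s b" using h(1,2) by blast
    then have "a \<noteq> b" using h(3) by auto
    moreover have "a < N" "b < N" using ab Sl(1) by auto
    ultimately show ?thesis using EE_rot[OF nc s] e ab by simp
  qed
  ultimately show ?thesis unfolding TS_def by blast
qed

lemma card_TS_le:
  assumes nc: "noncrossing_diags N T" and s: "s < N"
  shows "card (TS N T w) \<le> card (TS N (rotate N s ` T) (rr N s w))"
proof (rule card_inj_on_le)
  have inj: "inj_on (rr N s) {..<N}" using rr_inj[of _ N _ s] s by (auto simp: inj_on_def)
  show "inj_on ((`) (rr N s)) (TS N T w)"
  proof (rule inj_onI)
    fix A B assume "A \<in> TS N T w" "B \<in> TS N T w" "rr N s ` A = rr N s ` B"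
    moreover have "A \<subseteq> {..<N}" "B \<subseteq> {..<N}" using calculation by (auto simp: TS_def)
    ultimately show "A = B" using inj_on_image_eq_iff[OF inj] by blast
  qed
  show "(`) (rr N s) ` TS N T w \<subseteq> TS N (rotate N s ` T) (rr N s w)" using TS_rot[OF nc s] by blast
  show "finite (TS N (rotate N s ` T) (rr N s w))"
    by (rule finite_subset[of _ "Pow {..<N}"]) (auto simp: TS_def)
qed

lemma quid_TS: "noncrossing_diags N T \<Longrightarrow> quiddity N T i = int (card (TS N T (nat (i mod int N))))"
  unfolding quiddity_def using card_TS by simp

lemma nat_mod_shift: "0 < N \<Longrightarrow> nat ((i + int s) mod int N) = rr N s (nat (i mod int N))"
  unfolding rr_def
proof -
  assume N: "0 < N"
  have "int ((nat (i mod int N) + s) mod N) = (i mod int N + int s) mod int N"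
    using N by (simp add: zmod_int)
  also have "\<dots> = (i + int s) mod int N" by (simp add: mod_add_left_eq)
  finally show "nat ((i + int s) mod int N) = (nat (i mod int N) + s) mod N" by linarith
qed

lemma quid_rot:
  assumes tr: "triangulation N T" and s: "s < N"
  shows "quiddity N (rotate N s ` T) (i + int s) = quiddity N T i"
proof -
  have nc: "noncrossing_diags N T" and N: "0 < N" using tr by (auto simp: triangulation_def)
  have nc': "noncrossing_diags N (rotate N s ` T)" using ncd_rot[OF nc s] .
  define s' where "s' = (N - s) mod N"
  have s': "s' < N" using sinv_lt[OF s] unfolding s'_def .
  define w where "w = nat (i mod int N)"
  have wN: "w < N" unfolding w_def using N by (simp add: nat_less_iff)
  have a1: "card (TS N T w) \<le> card (TS N (rotate N s ` T) (rr N s w))" using card_TS_le[OF nc s] .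
  have "card (TS N (rotate N s ` T) (rr N s w)) \<le> card (TS N (rotate N s' ` rotate N s ` T) (rr N s' (rr N s w)))"
    using card_TS_le[OF nc' s'] .
  also have "rotate N s' ` rotate N s ` T = T" using rot_rot_set[OF nc s] unfolding s'_def .
  also have "rr N s' (rr N s w) = w" using rr_inv[OF wN s] unfolding s'_def .
  finally have a2: "card (TS N (rotate N s ` T) (rr N s w)) \<le> card (TS N T w)" .
  show ?thesis
    unfolding quid_TS[OF nc] quid_TS[OF nc'] nat_mod_shift[OF N] w_def[symmetric] using a1 a2 by simp
qed

lemma sym_period:
  assumes tr: "triangulation N T" and s: "s < N" and sym: "rotate N s ` T = T"
  shows "\<forall>i. quiddity N T (i + int s) = quiddity N T i"
  using quid_rot[OF tr s] sym by simp

lemma period_sym: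
  assumes tr: "triangulation N T" and s: "s < N" and per: "\<forall>i. quiddity N T (i + int s) = quiddity N T i"
  shows "rotate N s ` T = T"
proof (rule tri_unique)
  show "tri {0..<N} (rotate N s ` T)" using tri_rot[OF tr s] tri_link by blast
  show "tri {0..<N} T" using tr tri_link by blast
  show "\<forall>w\<in>{0..<N}. cnt {0..<N} (rotate N s ` T) w = cnt {0..<N} T w"
  proof
    fix w assume "w \<in> {0..<N}"
    then have w: "w < N" by simp
    have "int (cnt {0..<N} (rotate N s ` T) w) = quiddity N (rotate N s ` T) (int w)" using cnt_link[OF w] by simp
    also have "\<dots> = quiddity N (rotate N s ` T) ((int w - int s) + int s)" by simp
    also have "\<dots> = quiddity N T (int w - int s)" by (rule quid_rot[OF tr s])
    also have "\<dots> = quiddity N T ((int w - int s) + int s)" using per by metis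
    also have "\<dots> = int (cnt {0..<N} T w)" using cnt_link[OF w] by simp
    finally show "cnt {0..<N} (rotate N s ` T) w = cnt {0..<N} T w" by simp
  qed
qed




definition sol :: "(int \<Rightarrow> int) \<Rightarrow> (nat \<Rightarrow> int) \<Rightarrow> bool" where
  "sol a z \<longleftrightarrow> (\<forall>n. z (Suc (Suc n)) = a (int n + 1) * z (Suc n) - z n)"

definition yy :: "(int \<Rightarrow> int) \<Rightarrow> nat \<Rightarrow> int" where
  "yy a n = (if n = 0 then -1 else FT_aux a 1 (n - 1))"

lemma sol_x: "sol a (FT_aux a 0)"
  by (simp add: sol_def)

lemma sol_y: "sol a (yy a)"
  unfolding sol_def
proof
  fix n show "yy a (Suc (Suc n)) = a (int n + 1) * yy a (Suc n) - yy a n"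
    by (cases n) (auto simp: yy_def add.commute add.left_commute)
qed

lemma sol_rep:
  assumes "sol a z"
  shows "z n = z 1 * FT_aux a 0 n - z 0 * yy a n"
proof -
  have "z n = z 1 * FT_aux a 0 n - z 0 * yy a n \<and> z (Suc n) = z 1 * FT_aux a 0 (Suc n) - z 0 * yy a (Suc n)"
  proof (induction n)
    case 0 then show ?case by (simp add: yy_def)
  next
    case (Suc n)
    have "z (Suc (Suc n)) = a (int n + 1) * z (Suc n) - z n" using assms by (simp add: sol_def)
    moreover have "FT_aux a 0 (Suc (Suc n)) = a (int n + 1) * FT_aux a 0 (Suc n) - FT_aux a 0 n" by simp
    moreover have "yy a (Suc (Suc n)) = a (int n + 1) * yy a (Suc n) - yy a n" using sol_y[of a] by (simp add: sol_def)
    ultimately show ?case using Suc by algebra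
  qed
  then show ?thesis by simp
qed

lemma wronski: "FT_aux a 0 (Suc n) * yy a n - FT_aux a 0 n * yy a (Suc n) = -1"
proof (induction n)
  case 0 then show ?case by (simp add: yy_def)
next
  case (Suc n)
  have "yy a (Suc (Suc n)) = a (int n + 1) * yy a (Suc n) - yy a n" using sol_y[of a] by (simp add: sol_def)
  moreover have "FT_aux a 0 (Suc (Suc n)) = a (int n + 1) * FT_aux a 0 (Suc n) - FT_aux a 0 n" by simp
  ultimately show ?case using Suc by algebra
qed

lemma sol_shift:
  assumes per: "\<forall>i. a (i + int p) = a i" and z: "sol a z"
  shows "sol a (\<lambda>n. z (n + p))"
  unfolding sol_def
proof
  fix n
  have "z (Suc (Suc (n + p))) = a (int (n + p) + 1) * z (Suc (n + p)) - z (n + p)" using z by (simp add: sol_def)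
  moreover have "a (int (n + p) + 1) = a (int n + 1)" using per[rule_format, of "int n + 1"] by (simp add: add_ac)
  ultimately show "z (Suc (Suc n) + p) = a (int n + 1) * z (Suc n + p) - z (n + p)" by simp
qed

lemma key_rec:
  assumes per: "\<forall>i. a (i + int p) = a i"
  shows "FT_aux a 0 (n + 2 * p) = (FT_aux a 0 (p + 1) - yy a p) * FT_aux a 0 (n + p) - FT_aux a 0 n"
proof -
  define x where "x = FT_aux a 0"
  define y where "y = yy a"
  have sx: "sol a (\<lambda>n. x (n + p))" using sol_shift[OF per sol_x] unfolding x_def .
  have sy: "sol a (\<lambda>n. y (n + p))" using sol_shift[OF per sol_y] unfolding y_def .
  have rx: "\<And>n. x (n + p) = x (1 + p) * x n - x p * y n" using sol_rep[OF sx] unfolding x_def y_def by simp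
  have ry: "\<And>n. y (n + p) = y (1 + p) * x n - y p * y n" using sol_rep[OF sy] unfolding x_def y_def by simp
  have w: "x (Suc p) * y p - x p * y (Suc p) = -1" using wronski unfolding x_def y_def .
  have "x (n + 2 * p) = x ((n + p) + p)" by (simp add: add_ac mult_2)
  also have "\<dots> = x (1 + p) * x (n + p) - x p * y (n + p)" using rx by simp
  also have "\<dots> = x (1 + p) * x (n + p) - x p * (y (1 + p) * x n - y p * y n)" using ry by simp
  also have "\<dots> = (x (p + 1) - y p) * x (n + p) - x n"
  proof -
    have "x (n + p) = x (1 + p) * x n - x p * y n" using rx by simp
    moreover have e: "1 + p = Suc p" "p + 1 = Suc p" by simp_all
    ultimately show ?thesis using w unfolding e by algebra
  qed
  finally show ?thesis unfolding x_def y_def .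
qed




lemma per_mult:
  assumes "\<forall>i. a (i + int p) = (a i :: int)"
  shows "a (i + int (k * p)) = a i"
proof (induction k)
  case 0 then show ?case by simp
next
  case (Suc k)
  have "a (i + int (Suc k * p)) = a ((i + int (k * p)) + int p)" by (simp add: algebra_simps)
  also have "\<dots> = a (i + int (k * p))" using assms by blast
  finally show ?case using Suc by simp
qed

lemma per_neg:
  assumes "\<forall>i. a (i + int p) = (a i :: int)"
  shows "a (i - int (k * p)) = a i"
  using per_mult[OF assms, of "i - int (k * p)" k] by simp

lemma per_mod:
  assumes ps: "\<forall>i. a (i + int s) = (a i :: int)" and pp: "\<forall>i. a (i + int p) = a i"
  shows "\<forall>i. a (i + int (s mod p)) = a i"
proof
  fix i
  have e: "s div p * p + s mod p = s" by (rule div_mult_mod_eq)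
  have "int (s div p * p) + int (s mod p) = int s" using e of_nat_add by metis
  then have "int (s mod p) = int s - int ((s div p) * p)" by linarith
  then have "i + int (s mod p) = (i + int s) - int ((s div p) * p)" by linarith
  then have "a (i + int (s mod p)) = a ((i + int s) - int ((s div p) * p))" by (rule arg_cong)
  also have "\<dots> = a (i + int s)" using per_neg[OF pp] by blast
  also have "\<dots> = a i" using ps by blast
  finally show "a (i + int (s mod p)) = a i" .
qed

lemma minp_props:
  assumes per: "\<forall>i. a (i + int N) = (a i :: int)" and N: "0 < N"
  shows "0 < min_period a" "\<forall>i. a (i + int (min_period a)) = a i" "min_period a \<le> N"
    "\<And>s. 0 < s \<Longrightarrow> (\<forall>i. a (i + int s) = a i) \<Longrightarrow> min_period a dvd s"
proof -
  let ?P = "\<lambda>p::nat. 0 < p \<and> (\<forall>i. a (i + int p) = a i)"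
  have PN: "?P N" using per N by simp
  have P: "?P (min_period a)" unfolding min_period_def by (rule LeastI[of ?P, OF PN])
  then show "0 < min_period a" "\<forall>i. a (i + int (min_period a)) = a i" by auto
  show "min_period a \<le> N" unfolding min_period_def by (rule Least_le[of ?P, OF PN])
  fix s assume s: "0 < s" "\<forall>i. a (i + int s) = a i"
  have pm: "\<forall>i. a (i + int (s mod min_period a)) = a i" using per_mod[OF s(2)] P by blast
  show "min_period a dvd s"
  proof (rule ccontr)
    assume "\<not> min_period a dvd s"
    then have "0 < s mod min_period a" using mod_greater_zero_iff_not_dvd by blast
    then have "?P (s mod min_period a)" using pm by simp
    then have "min_period a \<le> s mod min_period a" unfolding min_period_def by (rule Least_le)
    moreover have "s mod min_period a < min_period a" using P by simp
    ultimately show False by simp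
  qed
qed

lemma per_of_dvd:
  assumes "\<forall>i. a (i + int p) = (a i :: int)" "p dvd s"
  shows "\<forall>i. a (i + int s) = a i"
  using per_mult[OF assms(1)] assms(2) by (metis dvd_def mult.commute)

lemma quid_perN: "0 < N \<Longrightarrow> quiddity N T (i + int N) = quiddity N T i"
  unfolding quiddity_def by simp




lemma trace_cases:
  fixes c :: "nat \<Rightarrow> int" and t :: int
  assumes rec: "\<And>j. c (j + 2) = t * c (j + 1) - c j" and c0: "c 0 = 0" and cm: "c m = 0"
    and pos: "\<And>j. 0 < j \<Longrightarrow> j < m \<Longrightarrow> c j > 0" and m2: "2 \<le> m"
  shows "(m = 2 \<and> t = 0) \<or> (m = 3 \<and> t = 1)"
proof -
  have c1: "c 1 > 0" using pos m2 by simp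
  have c2: "c 2 = t * c 1" using rec[of 0] c0 by (simp add: numeral_2_eq_2)
  have c3: "c 3 = (t * t - 1) * c 1" using rec[of 1] c2 by (simp add: algebra_simps numeral_3_eq_3 numeral_2_eq_2)
  consider "m = 2" | "m = 3" | "4 \<le> m" using m2 by linarith
  then show ?thesis
  proof cases
    case 1
    then have "t * c 1 = 0" using cm c2 by simp
    then show ?thesis using c1 1 by simp
  next
    case 2
    have "c 2 > 0" using pos 2 by simp
    then have tp: "t > 0" using c2 c1 by (simp add: zero_less_mult_iff)
    have "(t * t - 1) * c 1 = 0" using cm c3 2 by simp
    then have "t * t = 1" using c1 by simp
    have "t \<le> 1"
    proof (rule ccontr)
      assume "\<not> t \<le> 1"
      then have "t \<ge> 2" by simp
      then have "t * t \<ge> 2 * 2" using mult_mono[of 2 t 2 t] by simp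
      then show False using \<open>t * t = 1\<close> by simp
    qed
    then have "t = 1" using tp by simp
    then show ?thesis using 2 by simp
  next
    case 3
    have "c 2 > 0" using pos 3 by simp
    then have tp: "t > 0" using c2 c1 by (simp add: zero_less_mult_iff)
    have "c 3 > 0" using pos 3 by simp
    then have "t * t - 1 > 0" using c3 c1 by (simp add: zero_less_mult_iff)
    then have t2: "t \<ge> 2"
    proof -
      assume "t * t - 1 > 0"
      then have "t \<noteq> 1" by auto
      then show "t \<ge> 2" using tp by linarith
    qed
    have "c j \<ge> int j * c 1 \<and> c (j + 1) - c j \<ge> c 1" for j
    proof (induction j)
      case 0 then show ?case using c0 by simp
    next
      case (Suc j)
      have a: "c (Suc j) \<ge> int (Suc j) * c 1" using Suc by (simp add: algebra_simps)
      have "c (Suc j) \<ge> 0" using a c1 by (smt (verit) mult_nonneg_nonneg of_nat_0_le_iff)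
      then have "(t - 2) * c (Suc j) \<ge> 0" using t2 by simp
      moreover have "c (Suc j + 1) = t * c (Suc j) - c j" using rec[of j] by simp
      ultimately have "c (Suc j + 1) - c (Suc j) \<ge> c (Suc j) - c j" by (simp add: algebra_simps)
      then show ?case using a Suc by simp
    qed
    then have "c m \<ge> int m * c 1" by blast
    moreover have "int m * c 1 > 0" using c1 m2 by simp
    ultimately show ?thesis using cm by simp
  qed
qed




lemma sym_iff_dvd:
  assumes tr: "triangulation N T" and k2: "2 \<le> k" and p0: "0 < p"
    and perp: "\<forall>i. quiddity N T (i + int p) = quiddity N T i"
    and pdvd: "\<And>s. 0 < s \<Longrightarrow> (\<forall>i. quiddity N T (i + int s) = quiddity N T i) \<Longrightarrow> p dvd s"
    and Nm: "N = m * p" and N0: "0 < N"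
  shows "has_kfold_symmetry N T k \<longleftrightarrow> k dvd m"
proof
  assume h: "has_kfold_symmetry N T k"
  then have kN: "k dvd N" and r: "rotate N (N div k) ` T = T" by (auto simp: has_kfold_symmetry_def)
  define s where "s = N div k"
  have Nks: "N = k * s" using kN unfolding s_def by simp
  have s0: "0 < s" using Nks N0 by (cases s) auto
  have sN: "s < N" unfolding s_def using k2 N0 by (simp add: div_less_dividend)
  have "\<forall>i. quiddity N T (i + int s) = quiddity N T i" using sym_period[OF tr sN] r unfolding s_def by simp
  then have "p dvd s" using pdvd s0 by blast
  then obtain q where q: "s = p * q" by (auto simp: dvd_def)
  have "m * p = k * s" using Nm Nks by simp
  also have "\<dots> = (k * q) * p" unfolding q by (simp only: ac_simps)
  finally have "m * p = (k * q) * p" .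
  then have "m = k * q" using p0 by simp
  then show "k dvd m" by simp
next
  assume "k dvd m"
  then obtain q where q: "m = k * q" by (auto simp: dvd_def)
  have N': "N = k * (q * p)" using Nm q by (simp add: algebra_simps)
  then have kN: "k dvd N" by simp
  have sdef: "N div k = q * p" using N' k2 by simp
  have q0: "0 < q" using N' N0 by (cases q) auto
  have sN: "q * p < N" using N' k2 q0 p0 by simp
  have "p dvd q * p" by simp
  then have "\<forall>i. quiddity N T (i + int (q * p)) = quiddity N T i" using per_of_dvd[OF perp] by blast
  then have "rotate N (q * p) ` T = T" using period_sym[OF tr sN] by blast
  then show "has_kfold_symmetry N T k" unfolding has_kfold_symmetry_def sdef using kN by simp
qed


theorem proposition4p26:
  fixes N :: nat and F :: "int \<Rightarrow> int \<Rightarrow> int" and T :: "(nat \<times> nat) set"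
  assumes "frieze_pattern N F"
    and "triangulation N T"
    and "\<forall>i j. i \<le> j \<and> j \<le> i + int N \<longrightarrow> F i j = FT N T i j"
  shows "(pgc N T = -2 \<longleftrightarrow> \<not> (\<exists>k\<ge>2. has_kfold_symmetry N T k))
       \<and> (pgc N T = 0 \<longleftrightarrow> has_kfold_symmetry N T 2)
       \<and> (pgc N T = 1 \<longleftrightarrow> has_kfold_symmetry N T 3)"
proof -
  note fr = assms(1) and tr = assms(2) and eq = assms(3)
  define a where "a = quiddity N T"
  define p where "p = min_period a"
  have N3: "3 \<le> N" using tr by (simp add: triangulation_def)
  then have N0: "0 < N" by simp
  have perN: "\<forall>i. a (i + int N) = a i" unfolding a_def using quid_perN[OF N0] by blast
  note mp = minp_props[OF perN N0]
  have p0: "0 < p" and perp: "\<forall>i. a (i + int p) = a i" and pN: "p \<le> N"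
    using mp(1-3) unfolding p_def by auto
  have pdvd: "\<And>s. 0 < s \<Longrightarrow> (\<forall>i. a (i + int s) = a i) \<Longrightarrow> p dvd s" using mp(4) unfolding p_def by blast
  have "p dvd N" using pdvd[OF N0 perN] .
  define m where "m = N div p"
  have Nm: "N = m * p" using \<open>p dvd N\<close> unfolding m_def by simp
  have m1: "1 \<le> m" using Nm N0 by (cases m) auto
  define x where "x = FT_aux a 0"
  define t where "t = pgc N T"
  have FTx: "FT N T 0 (int n) = x n" for n unfolding FT_def x_def a_def by simp
  have tdef: "t = x (p + 1) - yy a p"
  proof -
    have "FT N T 1 (int p) = FT_aux a 1 (p - 1)" unfolding FT_def a_def using p0 by (simp add: nat_diff_distrib)
    also have "\<dots> = yy a p" unfolding yy_def using p0 by simp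
    finally have "FT N T 1 (int p) = yy a p" .
    moreover have "FT N T 0 (int p + 1) = x (p + 1)" using FTx[of "p + 1"] by (simp add: add.commute)
    ultimately show ?thesis unfolding t_def pgc_def Let_def p_def a_def by simp
  qed
  have frA: "\<forall>i. F i i = 0 \<and> F i (i + int N) = 0 \<and> F i (i + 1) = 1 \<and> F i (i + int N - 1) = 1"
    and frP: "\<forall>i j. 0 < j - i \<and> j - i < int N \<longrightarrow> 0 < F i j"
    using fr unfolding frieze_pattern_def by blast+
  have pos: "0 < x n" if "0 < n" "n < N" for n
  proof -
    have "0 < int n - 0 \<and> int n - 0 < int N \<longrightarrow> 0 < F 0 (int n)" using frP by blast
    then have "0 < F 0 (int n)" using that by simp
    moreover have "F 0 (int n) = FT N T 0 (int n)" using eq[rule_format, of 0 "int n"] that by simp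
    ultimately show ?thesis using FTx by simp
  qed
  have xN: "x N = 0"
  proof -
    have "F 0 (0 + int N) = 0" using frA by blast
    moreover have "F 0 (int N) = FT N T 0 (int N)" using eq[rule_format, of 0 "int N"] by simp
    ultimately show ?thesis using FTx[of N] by simp
  qed
  have xN1: "x (N - 1) = 1"
  proof -
    have f1: "F 0 (0 + int N - 1) = 1" using frA by blast
    have e1: "0 + int N - 1 = int (N - 1)" using N0 by linarith
    have f2: "0 \<le> int (N - 1) \<and> int (N - 1) \<le> 0 + int N \<longrightarrow> F 0 (int (N - 1)) = FT N T 0 (int (N - 1))"
      using eq by blast
    have "F 0 (int (N - 1)) = FT N T 0 (int (N - 1))" using f2 by linarith
    then show ?thesis using f1 FTx[of "N - 1"] unfolding e1 by linarith
  qed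
  have yN: "yy a N = 1"
  proof -
    have "F 1 (1 + int N - 1) = 1" using frA by blast
    moreover have "F 1 (int N) = FT N T 1 (int N)" using eq[rule_format, of 1 "int N"] N0 by simp
    moreover have "FT N T 1 (int N) = yy a N" unfolding FT_def yy_def a_def using N0 by (simp add: nat_diff_distrib)
    ultimately show ?thesis by simp
  qed
  define c where "c j = x (j * p)" for j
  have rec: "c (j + 2) = t * c (j + 1) - c j" for j
  proof -
    have "x (j * p + 2 * p) = (x (p + 1) - yy a p) * x (j * p + p) - x (j * p)"
      using key_rec[OF perp, of "j * p"] unfolding x_def .
    moreover have "(j + 2) * p = j * p + 2 * p" "(j + 1) * p = j * p + p" by (simp_all add: algebra_simps)
    ultimately show ?thesis unfolding c_def tdef by (simp only:)
  qed
  have c0: "c 0 = 0" unfolding c_def x_def by simp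
  have cm: "c m = 0" unfolding c_def using xN Nm by simp
  have cpos: "0 < c j" if "0 < j" "j < m" for j
  proof -
    have "0 < j * p" using that p0 by simp
    moreover have "j * p < N" using that Nm p0 by simp
    ultimately show ?thesis unfolding c_def using pos by simp
  qed
  have tcase: "(m = 1 \<and> t = -2) \<or> (m = 2 \<and> t = 0) \<or> (m = 3 \<and> t = 1)"
  proof (cases "m = 1")
    case True
    then have pNe: "p = N" using Nm by simp
    have "x (Suc (Suc (N - 2))) = a (0 + int (N - 2) + 1) * x (Suc (N - 2)) - x (N - 2)"
      unfolding x_def by simp
    moreover have "Suc (Suc (N - 2)) = N" "Suc (N - 2) = N - 1" using N3 by auto
    ultimately have "x N = a (int (N - 2) + 1) * x (N - 1) - x (N - 2)" by simp
    have "x (Suc (Suc (N - 1))) = a (0 + int (N - 1) + 1) * x (Suc (N - 1)) - x (N - 1)"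
      unfolding x_def by simp
    moreover have "Suc (Suc (N - 1)) = N + 1" "Suc (N - 1) = N" using N3 by auto
    ultimately have "x (N + 1) = - 1" using xN xN1 by simp
    then have "t = -2" using tdef pNe yN by simp
    then show ?thesis using True by simp
  next
    case False
    then have "2 \<le> m" using m1 by simp
    then show ?thesis using trace_cases[of c t m, OF rec c0 cm cpos] by auto
  qed
  have sym: "has_kfold_symmetry N T k \<longleftrightarrow> k dvd m" if "2 \<le> k" for k
    using sym_iff_dvd[OF tr that p0 perp[unfolded a_def] pdvd[unfolded a_def] Nm N0] .
  have A: "(\<exists>k\<ge>2. has_kfold_symmetry N T k) \<longleftrightarrow> m \<noteq> 1"
  proof
    assume "\<exists>k\<ge>2. has_kfold_symmetry N T k"
    then obtain k where "2 \<le> k" "k dvd m" using sym by blast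
    then show "m \<noteq> 1" by auto
  next
    assume "m \<noteq> 1"
    then have "2 \<le> m" "has_kfold_symmetry N T m" using m1 sym[of m] by auto
    then show "\<exists>k\<ge>2. has_kfold_symmetry N T k" by blast
  qed
  have B: "has_kfold_symmetry N T 2 \<longleftrightarrow> m = 2" using sym[of 2] tcase by auto
  have C: "has_kfold_symmetry N T 3 \<longleftrightarrow> m = 3" using sym[of 3] tcase by auto
  show ?thesis unfolding A B C t_def[symmetric] using tcase by auto
qed


end
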